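(* The $(1+1)$-type unbiased black-box complexity of the $\mathrm{DLB}$ problem is $O(n^2)$: there exists a $(1+1)$-type unary unbiased black-box algorithm whose expected runtime on $\mathrm{DLB}:\{0,1\}^n\to\mathbb{R}$ is $O(n^2)$.
   Context: Let $n$ be an even positive integer. For $x\in\{0,1\}^n$ consider the blocks $(x_{2\ell+1},x_{2\ell+2})$, $\ell=0,\dots,\frac n2-1$. If $x\neq(1,\dots,1)$, let $m$ be the smallest $\ell$ with $x_{2\ell+1}\neq 1$ or $x_{2\ell+2}\neq 1$, and define $\mathrm{DLB}(x)=2m+1$ if $x_{2m+1}+x_{2m+2}=0$ and $\mathrm{DLB}(x)=2m$ if $x_{2m+1}+x_{2m+2}=1$; set $\mathrm{DLB}(1,\dots,1)=n$. A unary unbiased variation operator $V$ assigns to each $x\in\{0,1\}^n$ a probability distribution $V(x)$ on $\{0,1\}^n$ such that for all $x,y,z$, $\Pr[y=V(x)]=\Pr[y\oplus z=V(x\oplus z)]$, and for all permutations $\sigma$ of $[1..n]$, $\Pr[y=V(x)]=\Pr[\sigma(y)=V(\sigma(x))]$, where $\sigma(x)=(x_{\sigma(1)},\dots,x_{\sigma(n)})$. A $(1+1)$-type unbiased black-box algorithm keeps a single current search point, initially uniformly random; in each iteration it produces one new search point by applying a unary unbiased variation operator to the current point, evaluates it, and decides whether to replace the current point by the new one; all choices (operator and acceptance) depend only on the fitness values observed so far. The runtime is the number of fitness evaluations until (and including) the first evaluation of an optimum; the complexity is the infimum of the expected runtime over all such algorithms. *)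

theory Defs
  imports "HOL-Probability.Probability" "HOL-Combinatorics.Permutations"
begin

text \<open>Bit strings of length n are lists of booleans of length n (True = 1).
  Position i of the list (0-based) is the paper's bit x_(i+1).\<close>

definition bitstrings :: "nat \<Rightarrow> bool list set" where
  "bitstrings n = {x. length x = n}"

definition bxor :: "bool list \<Rightarrow> bool list \<Rightarrow> bool list" where
  "bxor x z = map2 (\<lambda>a b. a \<noteq> b) x z"

definition perm_bits :: "nat \<Rightarrow> (nat \<Rightarrow> nat) \<Rightarrow> bool list \<Rightarrow> bool list" where
  "perm_bits n \<sigma> x = map (\<lambda>i. x ! \<sigma> i) [0..<n]"

definition DLB :: "nat \<Rightarrow> bool list \<Rightarrow> real" where
  "DLB n x = (if x = replicate n True then real n
     else (let m = (LEAST l. l < n div 2 \<and> \<not> (x ! (2*l) \<and> x ! (2*l+1))) in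
       if \<not> x ! (2*m) \<and> \<not> x ! (2*m+1) then real (2*m+1) else real (2*m)))"

definition unary_unbiased :: "nat \<Rightarrow> (bool list \<Rightarrow> bool list pmf) \<Rightarrow> bool" where
  "unary_unbiased n V \<longleftrightarrow>
     (\<forall>x\<in>bitstrings n. set_pmf (V x) \<subseteq> bitstrings n) \<and>
     (\<forall>x\<in>bitstrings n. \<forall>y\<in>bitstrings n. \<forall>z\<in>bitstrings n.
        pmf (V x) y = pmf (V (bxor x z)) (bxor y z)) \<and>
     (\<forall>\<sigma>. \<sigma> permutes {..<n} \<longrightarrow> (\<forall>x\<in>bitstrings n. \<forall>y\<in>bitstrings n.
        pmf (V x) y = pmf (V (perm_bits n \<sigma> x)) (perm_bits n \<sigma> y)))"

definition is_opt :: "nat \<Rightarrow> (bool list \<Rightarrow> real) \<Rightarrow> bool list \<Rightarrow> bool" where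
  "is_opt n f y \<longleftrightarrow> length y = n \<and> (\<forall>z\<in>bitstrings n. f z \<le> f y)"

text \<open>A (1+1)-type unbiased algorithm is given by
  ops h : the unary unbiased operator used when the fitness history is h, and
  acc h : the (possibly randomised) acceptance decision, where h is the fitness
          history including the fitness of the new offspring.
  Process states: (current point, fitness history, optimum already evaluated?).
  The state after t+1 fitness evaluations is alg_states n f ops acc t.\<close>

definition alg_init :: "nat \<Rightarrow> (bool list \<Rightarrow> real) \<Rightarrow> (bool list \<times> real list \<times> bool) pmf" where
  "alg_init n f = map_pmf (\<lambda>x. (x, [f x], is_opt n f x)) (pmf_of_set (bitstrings n))"

definition alg_step :: "nat \<Rightarrow> (bool list \<Rightarrow> real) \<Rightarrow> (real list \<Rightarrow> bool list \<Rightarrow> bool list pmf)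
    \<Rightarrow> (real list \<Rightarrow> bool pmf) \<Rightarrow> bool list \<times> real list \<times> bool
    \<Rightarrow> (bool list \<times> real list \<times> bool) pmf" where
  "alg_step n f ops acc s = (case s of (x, h, fd) \<Rightarrow>
     bind_pmf (ops h x) (\<lambda>y. let h' = h @ [f y] in
       map_pmf (\<lambda>b. (if b then y else x, h', fd \<or> is_opt n f y)) (acc h')))"

primrec alg_states :: "nat \<Rightarrow> (bool list \<Rightarrow> real) \<Rightarrow> (real list \<Rightarrow> bool list \<Rightarrow> bool list pmf)
    \<Rightarrow> (real list \<Rightarrow> bool pmf) \<Rightarrow> nat \<Rightarrow> (bool list \<times> real list \<times> bool) pmf" where
  "alg_states n f ops acc 0 = alg_init n f"
| "alg_states n f ops acc (Suc t) = bind_pmf (alg_states n f ops acc t) (alg_step n f ops acc)"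

text \<open>Expected runtime E[T] = sum_{k>=0} Pr[T > k], where Pr[T > 0] = 1 and
  Pr[T > t+1] = Pr[no optimum among the first t+1 evaluated points].\<close>
definition exp_runtime :: "nat \<Rightarrow> (bool list \<Rightarrow> real) \<Rightarrow> (real list \<Rightarrow> bool list \<Rightarrow> bool list pmf)
    \<Rightarrow> (real list \<Rightarrow> bool pmf) \<Rightarrow> ennreal" where
  "exp_runtime n f ops acc =
     1 + (\<Sum>t. ennreal (measure_pmf.prob (alg_states n f ops acc t) {s. \<not> snd (snd s)}))"

end

theory Submission
  imports Defs
begin
definition blk :: "bool list \<Rightarrow> nat \<Rightarrow> bool" where
  "blk x l = (x!(2*l) \<and> x!(2*l+1))"

lemma dlb_char:
  assumes len: "length x = n" and ev: "even n" and l: "l < n div 2"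
    and pre: "\<forall>l'<l. blk x l'" and nb: "\<not> blk x l"
  shows "DLB n x = real (if \<not> x!(2*l) \<and> \<not> x!(2*l+1) then 2*l+1 else 2*l)"
proof -
  have i: "2*l+1 < n" using l ev by auto
  have ne: "x \<noteq> replicate n True" using nb i unfolding blk_def by auto
  have le: "(LEAST l. l < n div 2 \<and> \<not> (x ! (2*l) \<and> x ! (2*l+1))) = l"
    apply (rule Least_equality)
    using l nb pre unfolding blk_def by (auto simp: not_less[symmetric])
  show ?thesis unfolding DLB_def using ne le by (simp add: Let_def)
qed

lemma all_blk_ones:
  assumes len: "length x = n" and ev: "even n" and all: "\<forall>l<n div 2. blk x l"
  shows "x = replicate n True"
proof (rule nth_equalityI)
  show "length x = length (replicate n True)" using len by simp
  fix i assume "i < length x"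
  then have "i div 2 < n div 2" using len ev by (auto elim!: evenE)
  then have "blk x (i div 2)" using all by auto
  moreover have "i = 2*(i div 2) \<or> i = 2*(i div 2)+1" by presburger
  ultimately have "x ! i" unfolding blk_def by metis
  then show "x ! i = replicate n True ! i" using \<open>i < length x\<close> len by simp
qed

lemma dlb_ones: "DLB n (replicate n True) = real n"
  unfolding DLB_def by simp

lemma dlb_ge:
  assumes len: "length y = n" and ev: "even n" and L: "L \<le> n div 2"
    and pre: "\<forall>l<L. blk y l"
  shows "DLB n y \<ge> 2*L"
proof (cases "\<forall>l<n div 2. blk y l")
  case True
  then have "y = replicate n True" using all_blk_ones len ev by blast
  then show ?thesis using L ev by (auto simp: dlb_ones elim!: evenE)
next
  case False
  define l where "l = (LEAST l. l < n div 2 \<and> \<not> blk y l)"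
  have ex: "\<exists>l. l < n div 2 \<and> \<not> blk y l" using False by auto
  have l1: "l < n div 2 \<and> \<not> blk y l" unfolding l_def using LeastI_ex[OF ex] .
  have l2: "\<forall>l'<l. blk y l'"
  proof (intro allI impI)
    fix l' assume "l' < l"
    then have "\<not>(l' < n div 2 \<and> \<not> blk y l')" unfolding l_def by (rule not_less_Least)
    then show "blk y l'" using \<open>l'<l\<close> l1 by auto
  qed
  have "L \<le> l" using l1 pre by (meson not_less)
  then show ?thesis using dlb_char[OF len ev _ l2] l1 by auto
qed

lemma dlb_le:
  assumes len: "length y = n" and ev: "even n"
  shows "DLB n y \<le> n"
proof (cases "\<forall>l<n div 2. blk y l")
  case True
  then have "y = replicate n True" using all_blk_ones len ev by blast
  then show ?thesis by (simp add: dlb_ones)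
next
  case False
  define l where "l = (LEAST l. l < n div 2 \<and> \<not> blk y l)"
  have ex: "\<exists>l. l < n div 2 \<and> \<not> blk y l" using False by auto
  have l1: "l < n div 2 \<and> \<not> blk y l" unfolding l_def using LeastI_ex[OF ex] .
  have l2: "\<forall>l'<l. blk y l'"
  proof (intro allI impI)
    fix l' assume "l' < l"
    then have "\<not>(l' < n div 2 \<and> \<not> blk y l')" unfolding l_def by (rule not_less_Least)
    then show "blk y l'" using \<open>l'<l\<close> l1 by auto
  qed
  show ?thesis using dlb_char[OF len ev _ l2] l1 ev by (auto elim!: evenE)
qed

definition flipb :: "bool list \<Rightarrow> nat \<Rightarrow> bool list" where
  "flipb x i = x[i := \<not> x!i]"

definition accr :: "real \<Rightarrow> real \<Rightarrow> bool" where
  "accr c w = (w \<noteq> c \<and> c - 1 \<le> w)"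

definition G :: "nat \<Rightarrow> nat \<Rightarrow> real" where
  "G n k = (if k \<ge> n then 0 else if odd k then real n * (real n - real k + 1)
     else real n * (real n - real k) - real n / 2)"

definition Gr :: "nat \<Rightarrow> real \<Rightarrow> real" where
  "Gr n v = G n (nat \<lfloor>v\<rfloor>)"

definition newx :: "nat \<Rightarrow> bool list \<Rightarrow> nat \<Rightarrow> bool list" where
  "newx n x i = (if accr (DLB n x) (DLB n (flipb x i)) then flipb x i else x)"

lemma flipb_nth: "j < length x \<Longrightarrow> flipb x i ! j = (if j = i then \<not> x!i else x!j)"
  unfolding flipb_def by auto

lemma length_flipb[simp]: "length (flipb x i) = length x"
  unfolding flipb_def by simp

lemma G_nonneg: "0 \<le> G n k"
proof -
  { assume "k < n"
    then have a: "real k + 1 \<le> real n" by linarith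
    have "0 \<le> real n * (real n - real k + 1)" using a by simp
    moreover have "real n / 2 \<le> real n * (real n - real k)"
      using mult_left_mono[of 1 "real n - real k" "real n"] a by simp
    ultimately have ?thesis unfolding G_def by auto }
  then show ?thesis unfolding G_def by fastforce
qed

lemma G_le: "G n k \<le> real n ^ 2"
proof -
  { assume "k < n" "odd k"
    then have a: "1 \<le> real k" by (cases k) auto
    have "real n * (real n - real k + 1) \<le> real n * real n"
      using mult_left_mono[of "real n - real k + 1" "real n" "real n"] a by simp }
  moreover have "real n * (real n - real k) \<le> real n * real n"
    using mult_left_mono[of "real n - real k" "real n" "real n"] by simp
  ultimately show ?thesis unfolding G_def by (auto simp: power2_eq_square)
qed

lemma G_ge_bound:
  assumes "k \<ge> 2*m+2" "2*m+2 \<le> n"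
  shows "G n k \<le> real n * (real n - real (2*m+2))"
proof -
  have z: "0 \<le> real n * (real n - real (2*m+2))" using assms by simp
  { assume "k < n" "odd k"
    then have "k \<ge> 2*m+3" using assms by presburger
    then have "real n * (real n - real k + 1) \<le> real n * (real n - real (2*m+2))"
      by (intro mult_left_mono) auto }
  moreover have "real n * (real n - real k) \<le> real n * (real n - real (2*m+2))"
    using assms by (intro mult_left_mono) auto
  ultimately show ?thesis unfolding G_def using z by auto
qed

lemma Gr_nat[simp]: "Gr n (real k) = G n k"
  unfolding Gr_def by simp

lemma Gr_2[simp]: "Gr n (2 * real m) = G n (2*m)"
  using Gr_nat[of n "2*m"] by simp

lemma Gr_2s[simp]: "Gr n (1 + 2 * real m) = G n (2*m+1)"
  using Gr_nat[of n "2*m+1"] by (simp add: add.commute)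

lemma dlb_nat: "\<exists>k. DLB n y = real k"
proof -
  define m where "m = (LEAST l. l < n div 2 \<and> \<not> (y ! (2*l) \<and> y ! (2*l+1)))"
  have "DLB n y = real (if y = replicate n True then n else
       if \<not> y ! (2*m) \<and> \<not> y ! (2*m+1) then 2*m+1 else 2*m)"
    unfolding DLB_def Let_def m_def[symmetric] by auto
  then show ?thesis by blast
qed

lemma drift_real:
  assumes len: "length x = n" and ev: "even n" and ne: "x \<noteq> replicate n True"
  shows "(\<Sum>i<n. Gr n (DLB n (newx n x i))) + real n \<le> real n * Gr n (DLB n x)"
proof -
  have ex: "\<exists>l. l < n div 2 \<and> \<not> blk x l" using all_blk_ones[OF len ev] ne by blast
  define m where "m = (LEAST l. l < n div 2 \<and> \<not> blk x l)"
  have m1: "m < n div 2 \<and> \<not> blk x m" unfolding m_def using LeastI_ex[OF ex] .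
  have m2: "\<forall>l'<m. blk x l'"
  proof (intro allI impI)
    fix l' assume "l' < m"
    then have "\<not>(l' < n div 2 \<and> \<not> blk x l')" unfolding m_def by (rule not_less_Least)
    then show "blk x l'" using \<open>l'<m\<close> m1 by auto
  qed
  have mn: "2*m+2 \<le> n" using m1 ev by (auto elim!: evenE)
  have fx: "DLB n x = real (if \<not> x!(2*m) \<and> \<not> x!(2*m+1) then 2*m+1 else 2*m)"
    using dlb_char[OF len ev _ m2] m1 by auto
  have other: "Gr n (DLB n (newx n x i)) = Gr n (DLB n x)" if i: "i < n" "i div 2 \<noteq> m" for i
  proof (cases "i div 2 < m")
    case True
    define j where "j = i div 2"
    have jn: "j < n div 2" using True m1 j_def by auto
    have pre: "\<forall>l'<j. blk (flipb x i) l'"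
      using m2 True len mn unfolding blk_def j_def by (auto simp: flipb_nth)
    have nb: "\<not> blk (flipb x i) j" and n00: "\<not> (\<not> flipb x i ! (2*j) \<and> \<not> flipb x i ! (2*j+1))"
    proof -
      have b: "blk x j" using m2 True j_def by auto
      have "i = 2*j \<or> i = 2*j+1" unfolding j_def by presburger
      then show "\<not> blk (flipb x i) j" "\<not> (\<not> flipb x i ! (2*j) \<and> \<not> flipb x i ! (2*j+1))"
        using b len jn ev unfolding blk_def by (auto simp: flipb_nth elim!: evenE)
    qed
    have "DLB n (flipb x i) = real (2*j)"
      using dlb_char[of "flipb x i" n j] len ev jn pre nb n00 by auto
    moreover have "2*j + 2 \<le> 2*m" using True j_def by auto
    ultimately have "\<not> accr (DLB n x) (DLB n (flipb x i))"
      unfolding accr_def using fx by auto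
    then show ?thesis unfolding newx_def by simp
  next
    case False
    then have gt: "i div 2 > m" using i by auto
    have pre: "\<forall>l'<m. blk (flipb x i) l'"
      using m2 gt len mn unfolding blk_def by (auto simp: flipb_nth)
    have b2: "flipb x i ! (2*m) = x!(2*m)" "flipb x i ! (2*m+1) = x!(2*m+1)"
      using gt len mn by (auto simp: flipb_nth)
    have "DLB n (flipb x i) = DLB n x"
      using dlb_char[of "flipb x i" n m] len ev m1 pre b2 fx unfolding blk_def by auto
    then show ?thesis unfolding newx_def by simp
  qed
  have sum_eq: "(\<Sum>i\<in>{2*m, 2*m+1}. Gr n (DLB n x) - Gr n (DLB n (newx n x i)))
      = (\<Sum>i<n. Gr n (DLB n x) - Gr n (DLB n (newx n x i)))"
  proof (rule sum.mono_neutral_left)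
    show "finite {..<n}" by simp
    show "{2*m, 2*m+1} \<subseteq> {..<n}" using mn by auto
    show "\<forall>i\<in>{..<n} - {2*m, 2*m+1}. Gr n (DLB n x) - Gr n (DLB n (newx n x i)) = 0"
    proof
      fix i assume i: "i \<in> {..<n} - {2*m, 2*m+1}"
      then have "i div 2 \<noteq> m" by auto
      then show "Gr n (DLB n x) - Gr n (DLB n (newx n x i)) = 0" using other i by auto
    qed
  qed
  have key: "(\<Sum>i\<in>{2*m, 2*m+1}. Gr n (DLB n x) - Gr n (DLB n (newx n x i))) \<ge> real n"
  proof (cases "\<not> x!(2*m) \<and> \<not> x!(2*m+1)")
    case True
    have fy: "DLB n (flipb x i) = real (2*m)" if "i = 2*m \<or> i = 2*m+1" for i
    proof -
      have pre: "\<forall>l'<m. blk (flipb x i) l'"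
        using m2 that len mn unfolding blk_def by (auto simp: flipb_nth)
      show ?thesis using dlb_char[of "flipb x i" n m] len ev m1 pre that True mn
        unfolding blk_def by (auto simp: flipb_nth)
    qed
    have "newx n x i = flipb x i" if "i = 2*m \<or> i = 2*m+1" for i
      unfolding newx_def accr_def using fy[OF that] fx True by auto
    then have "Gr n (DLB n (newx n x i)) = G n (2*m)" if "i = 2*m \<or> i = 2*m+1" for i
      using fy that by auto
    then show ?thesis using fx True mn by (auto simp: G_def)
  next
    case False
    then obtain a b where ab: "{a,b} = {2*m, 2*m+1}" "a \<noteq> b" "x!a" "\<not> x!b"
    proof (cases "x!(2*m)")
      case True
      then show ?thesis using that[of "2*m" "2*m+1"] m1 unfolding blk_def by auto
    next
      case F: False
      then show ?thesis using that[of "2*m+1" "2*m"] False by auto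
    qed
    have abn: "a < n" "b < n" using ab mn by (auto simp: doubleton_eq_iff)
    have pre_a: "\<forall>l'<m. blk (flipb x a) l'" and pre_b: "\<forall>l'<m. blk (flipb x b) l'"
      using m2 ab len mn unfolding blk_def by (auto simp: flipb_nth doubleton_eq_iff)
    have fa: "DLB n (flipb x a) = real (2*m+1)"
      using dlb_char[of "flipb x a" n m] len ev m1 pre_a ab mn False
      unfolding blk_def by (auto simp: flipb_nth doubleton_eq_iff)
    have pre_b2: "\<forall>l'<Suc m. blk (flipb x b) l'"
      using pre_b ab len mn unfolding blk_def by (auto simp: flipb_nth doubleton_eq_iff less_Suc_eq)
    have fb: "DLB n (flipb x b) \<ge> real (2*m+2)"
      using dlb_ge[of "flipb x b" n "Suc m"] len ev mn pre_b2 by auto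
    have fx2: "DLB n x = real (2*m)" using fx False by auto
    have na: "newx n x a = flipb x a" unfolding newx_def accr_def using fa fx2 by auto
    have nb: "newx n x b = flipb x b" unfolding newx_def accr_def using fb fx2 by auto
    obtain k where k: "DLB n (flipb x b) = real k"
      using that dlb_nat by blast
    have "G n k \<le> real n * (real n - real (2*m+2))"
      using G_ge_bound[of m k n] fb k mn by auto
    then have gb: "Gr n (DLB n (newx n x b)) \<le> real n * (real n - real (2*m+2))"
      using nb k by simp
    have ga: "Gr n (DLB n (newx n x a)) = real n * (real n - real (2*m))"
      using na fa mn by (simp add: G_def)
    have gx: "Gr n (DLB n x) = real n * (real n - real (2*m)) - real n / 2"
      using fx2 mn by (simp add: G_def)
    have s2: "(\<Sum>i\<in>{a, b}. Gr n (DLB n x) - Gr n (DLB n (newx n x i)))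
       = (Gr n (DLB n x) - Gr n (DLB n (newx n x a))) + (Gr n (DLB n x) - Gr n (DLB n (newx n x b)))"
      using ab(2) by simp
    have "real n * (real n - real (2*m)) - real n * (real n - real (2*m+2)) = 2 * real n"
      by (simp add: algebra_simps)
    then have "(\<Sum>i\<in>{a, b}. Gr n (DLB n x) - Gr n (DLB n (newx n x i))) \<ge> real n"
      unfolding s2 using ga gb gx by linarith
    then show ?thesis using ab by simp
  qed
  have "(\<Sum>i<n. Gr n (DLB n x) - Gr n (DLB n (newx n x i))) \<ge> real n"
    using sum_eq key by simp
  then show ?thesis by (simp add: sum_subtractf)
qed

definition opsA :: "nat \<Rightarrow> real list \<Rightarrow> bool list \<Rightarrow> bool list pmf" where
  "opsA n h x = map_pmf (flipb x) (pmf_of_set {..<n})"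

definition stepc :: "real \<Rightarrow> real \<Rightarrow> real" where
  "stepc c w = (if accr c w then w else c)"

fun curf :: "real list \<Rightarrow> real" where
  "curf [] = 0"
| "curf (v # vs) = foldl stepc v vs"

definition accA :: "real list \<Rightarrow> bool pmf" where
  "accA h = return_pmf (accr (curf (butlast h)) (last h))"

lemma curf_snoc: "h \<noteq> [] \<Longrightarrow> curf (h @ [w]) = stepc (curf h) w"
  by (cases h) auto

definition Inv :: "nat \<Rightarrow> bool list \<times> real list \<times> bool \<Rightarrow> bool" where
  "Inv n s = (case s of (x, h, fd) \<Rightarrow> length x = n \<and> h \<noteq> [] \<and> curf h = DLB n x
      \<and> (fd \<or> x \<noteq> replicate n True))"

definition Psi :: "nat \<Rightarrow> bool list \<times> real list \<times> bool \<Rightarrow> ennreal" where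
  "Psi n s = (case s of (x, h, fd) \<Rightarrow> if fd then 0 else ennreal (Gr n (DLB n x)))"

definition nst :: "nat \<Rightarrow> bool list \<times> real list \<times> bool \<Rightarrow> nat \<Rightarrow> bool list \<times> real list \<times> bool" where
  "nst n s i = (case s of (x, h, fd) \<Rightarrow>
     (newx n x i, h @ [DLB n (flipb x i)], fd \<or> is_opt n (DLB n) (flipb x i)))"

lemma step_eq:
  assumes "Inv n s"
  shows "alg_step n (DLB n) (opsA n) accA s = map_pmf (nst n s) (pmf_of_set {..<n})"
proof -
  obtain x h fd where s: "s = (x, h, fd)" by (cases s) auto
  have c: "curf h = DLB n x" using assms s unfolding Inv_def by auto
  show ?thesis unfolding s alg_step_def opsA_def accA_def
    by (simp add: bind_map_pmf map_pmf_def bind_return_pmf Let_def c nst_def newx_def bind_assoc_pmf)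
qed

lemma opt_ones: "even n \<Longrightarrow> is_opt n (DLB n) (replicate n True)"
  unfolding is_opt_def bitstrings_def using dlb_le by (auto simp: dlb_ones)

lemma inv_step:
  assumes "Inv n s" "even n" "n > 0" "s' \<in> set_pmf (alg_step n (DLB n) (opsA n) accA s)"
  shows "Inv n s'"
proof -
  obtain x h fd where s: "s = (x, h, fd)" by (cases s) auto
  have sp: "set_pmf (pmf_of_set {..<n}) = {..<n}" using assms(3) by (intro set_pmf_of_set) auto
  obtain i where i: "i < n" "s' = nst n s i"
    using assms(4) sp unfolding step_eq[OF assms(1)] by auto
  have I: "length x = n" "h \<noteq> []" "curf h = DLB n x" "fd \<or> x \<noteq> replicate n True"
    using assms(1) s unfolding Inv_def by auto
  show ?thesis
    using I opt_ones[OF assms(2)] unfolding i s nst_def Inv_def newx_def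
    by (auto simp: curf_snoc stepc_def)
qed

lemma inv_states:
  assumes "even n" "n > 0"
  shows "s \<in> set_pmf (alg_states n (DLB n) (opsA n) accA t) \<Longrightarrow> Inv n s"
proof (induction t arbitrary: s)
  case 0
  have fin: "finite (bitstrings n)" proof -
    have "bitstrings n = {xs. set xs \<subseteq> (UNIV::bool set) \<and> length xs = n}"
      unfolding bitstrings_def by simp
    then show ?thesis using finite_lists_length_eq[of "UNIV::bool set" n] by simp
  qed
  have ne: "bitstrings n \<noteq> {}" unfolding bitstrings_def by (auto intro!: exI[of _ "replicate n True"])
  have sps: "set_pmf (pmf_of_set (bitstrings n)) = bitstrings n" using ne fin by simp
  have "s \<in> set_pmf (alg_init n (DLB n))" using 0 by simp
  then obtain x where x: "x \<in> bitstrings n" "s = (x, [DLB n x], is_opt n (DLB n) x)"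
    unfolding alg_init_def by (auto simp: sps)
  show ?case using x opt_ones[OF assms(1)] unfolding Inv_def bitstrings_def by auto
next
  case (Suc t)
  then obtain s0 where "s0 \<in> set_pmf (alg_states n (DLB n) (opsA n) accA t)"
    "s \<in> set_pmf (alg_step n (DLB n) (opsA n) accA s0)" by auto
  then show ?case using inv_step[OF _ assms] Suc.IH by blast
qed

lemma drift_state:
  assumes I: "Inv n s" and ev: "even n" and n0: "n > 0"
  shows "(\<integral>\<^sup>+s'. Psi n s' \<partial>alg_step n (DLB n) (opsA n) accA s)
           + indicator {s. \<not> snd (snd s)} s \<le> Psi n s"
proof -
  obtain x h fd where s: "s = (x, h, fd)" by (cases s) auto
  have I': "length x = n" "fd \<or> x \<noteq> replicate n True" using I s unfolding Inv_def by auto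
  have ne: "{..<n} \<noteq> {}" using n0 by auto
  have int: "(\<integral>\<^sup>+s'. Psi n s' \<partial>alg_step n (DLB n) (opsA n) accA s)
      = (\<Sum>i<n. Psi n (nst n s i)) / of_nat n"
    unfolding step_eq[OF I] nn_integral_map_pmf
    using nn_integral_pmf_of_set[OF ne, of "\<lambda>i. Psi n (nst n s i)"] by simp
  show ?thesis
  proof (cases fd)
    case True
    then have "Psi n (nst n s i) = 0" for i unfolding s nst_def Psi_def by simp
    then show ?thesis unfolding int using True s by (simp add: Psi_def)
  next
    case False
    then have xne: "x \<noteq> replicate n True" using I' by auto
    have le: "Psi n (nst n s i) \<le> ennreal (Gr n (DLB n (newx n x i)))" for i
      unfolding s nst_def Psi_def by simp
    have "(\<Sum>i<n. Psi n (nst n s i)) \<le> (\<Sum>i<n. ennreal (Gr n (DLB n (newx n x i))))"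
      by (rule sum_mono) (rule le)
    also have "\<dots> = ennreal (\<Sum>i<n. Gr n (DLB n (newx n x i)))"
      by (rule sum_ennreal) (simp add: Gr_def G_nonneg)
    finally have sl: "(\<Sum>i<n. Psi n (nst n s i)) / of_nat n
        \<le> ennreal (\<Sum>i<n. Gr n (DLB n (newx n x i))) / ennreal (real n)"
      by (simp add: ennreal_of_nat_eq_real_of_nat divide_right_mono_ennreal)
    define S where "S = (\<Sum>i<n. Gr n (DLB n (newx n x i)))"
    have S0: "0 \<le> S" unfolding S_def by (intro sum_nonneg) (simp add: Gr_def G_nonneg)
    have dr: "S + real n \<le> real n * Gr n (DLB n x)"
      using drift_real[OF I'(1) ev xne] unfolding S_def .
    have dr2: "S / real n + 1 \<le> Gr n (DLB n x)"
      using dr n0 by (simp add: field_simps)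
    have "ennreal S / ennreal (real n) + 1 = ennreal (S / real n + 1)"
      using S0 n0 by (simp add: divide_ennreal)
    also have "\<dots> \<le> ennreal (Gr n (DLB n x))" by (rule ennreal_leI[OF dr2])
    finally have fin: "ennreal S / ennreal (real n) + 1 \<le> ennreal (Gr n (DLB n x))" .
    have "(\<Sum>i<n. Psi n (nst n s i)) / of_nat n + 1 \<le> ennreal S / ennreal (real n) + 1"
      using sl unfolding S_def by (rule add_right_mono)
    also note fin
    finally have "(\<Sum>i<n. Psi n (nst n s i)) / of_nat n + 1 \<le> ennreal (Gr n (DLB n x))" .
    moreover have "indicator {s. \<not> snd (snd s)} s = (1::ennreal)" using False s by simp
    moreover have "Psi n s = ennreal (Gr n (DLB n x))" using False s by (simp add: Psi_def)
    ultimately show ?thesis unfolding int by simp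
  qed
qed

lemma tele:
  assumes ev: "even n" and n0: "n > 0"
  defines "M \<equiv> alg_states n (DLB n) (opsA n) accA"
  shows "(\<Sum>t<N. ennreal (measure_pmf.prob (M t) {s. \<not> snd (snd s)}))
           + (\<integral>\<^sup>+s. Psi n s \<partial>M N) \<le> (\<integral>\<^sup>+s. Psi n s \<partial>M 0)"
proof (induction N)
  case 0
  then show ?case by simp
next
  case (Suc N)
  let ?A = "{s::bool list \<times> real list \<times> bool. \<not> snd (snd s)}"
  have P: "ennreal (measure_pmf.prob (M N) ?A) = (\<integral>\<^sup>+s. indicator ?A s \<partial>M N)"
    by (simp add: measure_pmf.emeasure_eq_measure[symmetric])
  have E: "(\<integral>\<^sup>+s. Psi n s \<partial>M (Suc N))
      = (\<integral>\<^sup>+s. (\<integral>\<^sup>+s'. Psi n s' \<partial>alg_step n (DLB n) (opsA n) accA s) \<partial>M N)"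
    unfolding M_def by simp
  have "(\<integral>\<^sup>+s. Psi n s \<partial>M (Suc N)) + ennreal (measure_pmf.prob (M N) ?A)
     = (\<integral>\<^sup>+s. (\<integral>\<^sup>+s'. Psi n s' \<partial>alg_step n (DLB n) (opsA n) accA s) + indicator ?A s \<partial>M N)"
    unfolding E P by (rule nn_integral_add[symmetric]) auto
  also have "\<dots> \<le> (\<integral>\<^sup>+s. Psi n s \<partial>M N)"
  proof (rule nn_integral_mono_AE)
    show "AE s in measure_pmf (M N). (\<integral>\<^sup>+s'. Psi n s' \<partial>alg_step n (DLB n) (opsA n) accA s)
          + indicator ?A s \<le> Psi n s"
      unfolding AE_measure_pmf_iff using drift_state inv_states[OF ev n0] ev n0 unfolding M_def by blast
  qed
  finally have st: "(\<integral>\<^sup>+s. Psi n s \<partial>M (Suc N)) + ennreal (measure_pmf.prob (M N) ?A)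
      \<le> (\<integral>\<^sup>+s. Psi n s \<partial>M N)" .
  have "(\<Sum>t<Suc N. ennreal (measure_pmf.prob (M t) ?A)) + (\<integral>\<^sup>+s. Psi n s \<partial>M (Suc N))
      = (\<Sum>t<N. ennreal (measure_pmf.prob (M t) ?A))
         + ((\<integral>\<^sup>+s. Psi n s \<partial>M (Suc N)) + ennreal (measure_pmf.prob (M N) ?A))"
    by (simp add: algebra_simps)
  also have "\<dots> \<le> (\<Sum>t<N. ennreal (measure_pmf.prob (M t) ?A)) + (\<integral>\<^sup>+s. Psi n s \<partial>M N)"
    by (rule add_left_mono[OF st])
  also have "\<dots> \<le> (\<integral>\<^sup>+s. Psi n s \<partial>M 0)" by (rule Suc.IH)
  finally show ?case .
qed

lemma Psi_le: "Psi n s \<le> ennreal (real n ^ 2)"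
  unfolding Psi_def Gr_def using G_le by (auto split: prod.splits intro: ennreal_leI)

lemma runtime_bound:
  assumes ev: "even n" and n0: "n > 0"
  shows "exp_runtime n (DLB n) (opsA n) accA \<le> ennreal (2 * real n ^ 2)"
proof -
  define M where "M = alg_states n (DLB n) (opsA n) accA"
  have E0: "(\<integral>\<^sup>+s. Psi n s \<partial>M 0) \<le> ennreal (real n ^ 2)"
  proof -
    have "(\<integral>\<^sup>+s. Psi n s \<partial>M 0) \<le> (\<integral>\<^sup>+s. ennreal (real n ^ 2) \<partial>M 0)"
      by (rule nn_integral_mono) (rule Psi_le)
    also have "\<dots> = ennreal (real n ^ 2)" by (simp add: measure_pmf.emeasure_space_1)
    finally show ?thesis .
  qed
  have partial: "(\<Sum>t<N. ennreal (measure_pmf.prob (M t) {s. \<not> snd (snd s)})) \<le> ennreal (real n ^ 2)" for N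
  proof -
    have "(\<Sum>t<N. ennreal (measure_pmf.prob (M t) {s. \<not> snd (snd s)}))
        \<le> (\<Sum>t<N. ennreal (measure_pmf.prob (M t) {s. \<not> snd (snd s)})) + (\<integral>\<^sup>+s. Psi n s \<partial>M N)"
      by simp
    also have "\<dots> \<le> (\<integral>\<^sup>+s. Psi n s \<partial>M 0)" using tele[OF ev n0] unfolding M_def by blast
    finally show ?thesis using E0 by (rule order_trans)
  qed
  have "(\<Sum>t. ennreal (measure_pmf.prob (M t) {s. \<not> snd (snd s)})) \<le> ennreal (real n ^ 2)"
    unfolding suminf_eq_SUP by (rule SUP_least) (rule partial)
  then have "exp_runtime n (DLB n) (opsA n) accA \<le> 1 + ennreal (real n ^ 2)"
    unfolding exp_runtime_def M_def by (rule add_left_mono)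
  also have "\<dots> \<le> ennreal (2 * real n ^ 2)"
  proof -
    have "1 \<le> real n ^ 2" using n0 by (simp add: one_le_power)
    then have "1 + real n ^ 2 \<le> 2 * real n ^ 2" by simp
    then show ?thesis using ennreal_leI by (metis ennreal_1 ennreal_plus zero_le_one zero_le_power2)
  qed
  finally show ?thesis .
qed

definition Dset :: "nat \<Rightarrow> bool list \<Rightarrow> bool list \<Rightarrow> nat set" where
  "Dset n x y = {i. i < n \<and> x!i \<noteq> y!i}"

lemma card_single_set:
  assumes "D \<subseteq> {..<n}"
  shows "card {i. i < n \<and> D = {i}} = (if card D = 1 then 1 else 0)"
proof (cases "card D = 1")
  case True
  then obtain j where j: "D = {j}" by (auto simp: card_Suc_eq)
  then have "{i. i < n \<and> D = {i}} = {j}" using assms by auto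
  then show ?thesis using True by simp
next
  case False
  have e: "{i. i < n \<and> D = {i}} = {}"
  proof (rule ccontr)
    assume "{i. i < n \<and> D = {i}} \<noteq> {}"
    then obtain i where "D = {i}" by auto
    then show False using False by simp
  qed
  show ?thesis unfolding e using False by simp
qed

lemma pmf_opsA:
  assumes x: "length x = n" and y: "length y = n" and n0: "n > 0"
  shows "pmf (opsA n h x) y = (if card (Dset n x y) = 1 then 1 / real n else 0)"
proof -
  have ne: "{..<n} \<noteq> {}" using n0 by auto
  have eq: "{..<n} \<inter> flipb x -` {y} = {i. i < n \<and> Dset n x y = {i}}"
  proof (intro set_eqI iffI)
    fix i assume "i \<in> {..<n} \<inter> flipb x -` {y}"
    then have i: "i < n" "flipb x i = y" by auto
    have yj: "y ! j = (if j = i then \<not> x!i else x!j)" if "j < n" for j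
    proof -
      have "y ! j = flipb x i ! j" using i by simp
      also have "\<dots> = (if j = i then \<not> x!i else x!j)" using flipb_nth[of j x i] that x by simp
      finally show ?thesis .
    qed
    have "Dset n x y = {i}"
    proof (intro set_eqI)
      fix j show "j \<in> Dset n x y \<longleftrightarrow> j \<in> {i}"
      proof (cases "j < n")
        case True
        then show ?thesis using yj[OF True] unfolding Dset_def by auto
      next
        case False
        then show ?thesis using i(1) unfolding Dset_def by auto
      qed
    qed
    then show "i \<in> {i. i < n \<and> Dset n x y = {i}}" using i by auto
  next
    fix i assume "i \<in> {i. i < n \<and> Dset n x y = {i}}"
    then have i: "i < n" "Dset n x y = {i}" by auto
    have "flipb x i = y"
    proof (rule nth_equalityI)
      show "length (flipb x i) = length y" using x y by simp
      fix j assume "j < length (flipb x i)"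
      then have j: "j < n" using x by simp
      have "(j \<in> Dset n x y) = (j = i)" using i by auto
      then show "flipb x i ! j = y ! j" using j x unfolding Dset_def by (auto simp: flipb_nth)
    qed
    then show "i \<in> {..<n} \<inter> flipb x -` {y}" using i by auto
  qed
  have "pmf (opsA n h x) y = real (card {i. i < n \<and> Dset n x y = {i}}) / real n"
    unfolding opsA_def pmf_map measure_pmf_of_set[OF ne finite_lessThan] eq by simp
  also have "\<dots> = (if card (Dset n x y) = 1 then 1 / real n else 0)"
    by (subst card_single_set) (auto simp: Dset_def)
  finally show ?thesis .
qed

lemma bxor_nth: "i < length x \<Longrightarrow> i < length z \<Longrightarrow> bxor x z ! i = (x!i \<noteq> z!i)"
  unfolding bxor_def by simp

lemma length_bxor: "length (bxor x z) = min (length x) (length z)"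
  unfolding bxor_def by simp

lemma perm_bits_nth: "i < n \<Longrightarrow> perm_bits n \<sigma> x ! i = x ! \<sigma> i"
  unfolding perm_bits_def by simp

lemma length_perm_bits: "length (perm_bits n \<sigma> x) = n"
  unfolding perm_bits_def by simp

lemma unbiased_opsA:
  assumes n0: "n > 0"
  shows "unary_unbiased n (opsA n h)"
  unfolding unary_unbiased_def
proof (intro conjI ballI allI impI)
  fix x assume "x \<in> bitstrings n"
  then show "set_pmf (opsA n h x) \<subseteq> bitstrings n"
    unfolding opsA_def bitstrings_def set_map_pmf by (auto simp del: set_pmf_of_set)
next
  fix x y z assume xyz: "x \<in> bitstrings n" "y \<in> bitstrings n" "z \<in> bitstrings n"
  then have l: "length x = n" "length y = n" "length z = n" unfolding bitstrings_def by auto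
  have "Dset n (bxor x z) (bxor y z) = Dset n x y"
    unfolding Dset_def using l by (auto simp: bxor_nth)
  then show "pmf (opsA n h x) y = pmf (opsA n h (bxor x z)) (bxor y z)"
    using l n0 by (simp add: pmf_opsA length_bxor)
next
  fix \<sigma> x y assume p: "\<sigma> permutes {..<n}" and xy: "x \<in> bitstrings n" "y \<in> bitstrings n"
  then have l: "length x = n" "length y = n" unfolding bitstrings_def by auto
  have D: "Dset n (perm_bits n \<sigma> x) (perm_bits n \<sigma> y) = {i. i < n \<and> \<sigma> i \<in> Dset n x y}"
  proof -
    have sl: "\<And>i. i < n \<Longrightarrow> \<sigma> i < n" using permutes_in_image[OF p] by auto
    show ?thesis
    proof (intro set_eqI)
      fix i
      show "i \<in> Dset n (perm_bits n \<sigma> x) (perm_bits n \<sigma> y) \<longleftrightarrow> i \<in> {i. i < n \<and> \<sigma> i \<in> Dset n x y}"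
      proof (cases "i < n")
        case True
        then show ?thesis using sl[OF True] by (simp add: Dset_def perm_bits_nth)
      next
        case False
        then show ?thesis by (simp add: Dset_def)
      qed
    qed
  qed
  have "bij_betw \<sigma> {i. i < n \<and> \<sigma> i \<in> Dset n x y} (Dset n x y)"
  proof (rule bij_betw_imageI)
    show "inj_on \<sigma> {i. i < n \<and> \<sigma> i \<in> Dset n x y}"
      by (rule inj_on_subset[OF permutes_inj[OF p]]) simp
    show "\<sigma> ` {i. i < n \<and> \<sigma> i \<in> Dset n x y} = Dset n x y"
    proof (intro set_eqI iffI)
      fix j assume "j \<in> \<sigma> ` {i. i < n \<and> \<sigma> i \<in> Dset n x y}"
      then show "j \<in> Dset n x y" by auto
    next
      fix j assume j: "j \<in> Dset n x y"
      then have jn: "j < n" unfolding Dset_def by auto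
      have "inv \<sigma> j < n" using permutes_in_image[OF permutes_inv[OF p], of j] jn by simp
      moreover have "\<sigma> (inv \<sigma> j) = j" using permutes_inverses(1)[OF p] by simp
      ultimately have m: "inv \<sigma> j \<in> {i. i < n \<and> \<sigma> i \<in> Dset n x y}" using j by simp
      have "\<sigma> (inv \<sigma> j) \<in> \<sigma> ` {i. i < n \<and> \<sigma> i \<in> Dset n x y}" by (rule imageI[OF m])
      then show "j \<in> \<sigma> ` {i. i < n \<and> \<sigma> i \<in> Dset n x y}" using \<open>\<sigma> (inv \<sigma> j) = j\<close> by simp
    qed
  qed
  then have "card (Dset n (perm_bits n \<sigma> x) (perm_bits n \<sigma> y)) = card (Dset n x y)"
    unfolding D by (rule bij_betw_same_card)
  then show "pmf (opsA n h x) y = pmf (opsA n h (perm_bits n \<sigma> x)) (perm_bits n \<sigma> y)"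
    using l n0 by (simp add: pmf_opsA length_perm_bits)
qed

theorem theorem11:
  shows "\<exists>C::real. \<exists>n0::nat. \<forall>n. n \<ge> n0 \<and> even n \<and> n > 0 \<longrightarrow>
     (\<exists>ops acc. (\<forall>h. unary_unbiased n (ops h)) \<and>
        exp_runtime n (DLB n) ops acc \<le> ennreal (C * real n ^ 2))"
proof -
  have "\<forall>n. n \<ge> 0 \<and> even n \<and> n > 0 \<longrightarrow>
     (\<exists>ops acc. (\<forall>h. unary_unbiased n (ops h)) \<and>
        exp_runtime n (DLB n) ops acc \<le> ennreal (2 * real n ^ 2))"
  proof (intro allI impI)
    fix n :: nat assume a: "0 \<le> n \<and> even n \<and> n > 0"
    show "\<exists>ops acc. (\<forall>h. unary_unbiased n (ops h)) \<and>
        exp_runtime n (DLB n) ops acc \<le> ennreal (2 * real n ^ 2)"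
      using unbiased_opsA runtime_bound a by blast
  qed
  then show ?thesis by blast
qed

end
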